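(* Let $y\ge 1$ and $m\ge 2$ be integers. Consider the random walk $(X_t)_{t\ge 0}$ on $\mathbb{Z}$ with $X_0=m-1$ whose steps are independent and equal to $+y$ or $-1$, each with probability $\tfrac12$, stopped at the first time $\tau$ at which $X_\tau\in\{0\}\cup\{m,m+1,\dots,m+y-1\}$. For $j\ge 0$ let $\rho_j$ be the probability that $\tau<\infty$, $X_\tau\in\{m,\dots,m+y-1\}$, and exactly $j$ of the first $\tau$ steps are $-1$ steps, and set $$p_r(z)=\sum_{j\ge 0}\rho_j\, z^{j+1}.$$ For an integer $k$ define $$u[y,k](z)=\sum_{\substack{n\ge 0\\ (y+1)n-k<0}}\frac{z^{yn}}{2^{(y+1)n+1-k}}\binom{(y+1)n-k}{n}.$$ Then, as formal power series in $z$, $$p_r(z)=\frac{z\,u[y,m-1](z)+z^{2}\,u[y,m-2](z)+\cdots+z^{y}\,u[y,m-y](z)}{u[y,m](z)}.$$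
   Context: For an integer $a$ (possibly negative) and $n\ge 0$, $\binom{a}{n}=a(a-1)\cdots(a-n+1)/n!$. The sum defining $u[y,k]$ is finite, and is the empty sum $0$ when $k\le 0$. Before absorption the walk stays in $\{1,\dots,m-1\}$, so it cannot jump over the right absorbing set $\{m,\dots,m+y-1\}$. $p_r$ is the generating function for absorption at one of the right-hand barriers $m,\dots,m+y-1$, with $z$ marking backward steps and an extra overall factor $z$. *)

theory Defs
  imports Complex_Main "HOL-Computational_Algebra.Formal_Power_Series"
begin

definition walk_pos :: "nat \<Rightarrow> int \<Rightarrow> bool list \<Rightarrow> int" where
  "walk_pos y m s = m - 1 + (\<Sum>b\<leftarrow>s. if b then int y else -1)"

definition absorbing :: "nat \<Rightarrow> int \<Rightarrow> int set" where
  "absorbing y m = {0} \<union> {m..m + int y - 1}"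

definition absorbed_right :: "nat \<Rightarrow> int \<Rightarrow> bool list \<Rightarrow> bool" where
  "absorbed_right y m s \<longleftrightarrow>
     (\<forall>t < length s. walk_pos y m (take t s) \<notin> absorbing y m) \<and>
     walk_pos y m s \<in> {m..m + int y - 1}"

text \<open>rho_j: probability of the event {tau < infinity, X_tau in the right set,
  exactly j of the first tau steps are -1}; each step sequence of length L has
  probability 1/2^L, and the event is the disjoint union over L.\<close>
definition rho :: "nat \<Rightarrow> int \<Rightarrow> nat \<Rightarrow> real" where
  "rho y m j = (\<Sum>L. real (card {s. length s = L \<and> absorbed_right y m s \<and>
                                     length (filter Not s) = j}) / 2 ^ L)"

definition p_r :: "nat \<Rightarrow> int \<Rightarrow> real fps" where
  "p_r y m = Abs_fps (\<lambda>i. if i = 0 then 0 else rho y m (i - 1))"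

text \<open>u[y,k](z), a finite sum (binomial with possibly negative integer top).\<close>
definition u :: "nat \<Rightarrow> int \<Rightarrow> real fps" where
  "u y k = (\<Sum>n\<in>{n::nat. int ((y + 1) * n) - k < 0}.
      fps_const ((real_of_int (int ((y + 1) * n) - k) gchoose n)
                 / ((2::real) powi (int ((y + 1) * n) + 1 - k))) * fps_X ^ (y * n))"

end

theory Submission
  imports Defs
begin

definition uc :: "nat \<Rightarrow> int \<Rightarrow> nat \<Rightarrow> real" where
  "uc y k n = (real_of_int (int ((y + 1) * n) - k) gchoose n)
                 / ((2::real) powi (int ((y + 1) * n) + 1 - k))"

lemma u_nth:
  assumes "y \<ge> 1"
  shows "fps_nth (u y k) N = (if y dvd N \<and> int ((y + 1) * (N div y)) - k < 0 then uc y k (N div y) else 0)"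
proof -
  let ?I = "{n::nat. int ((y + 1) * n) - k < 0}"
  have "fps_nth (u y k) N = (\<Sum>n\<in>?I. uc y k n * (if N = y * n then 1 else 0))"
    unfolding u_def fps_sum_nth uc_def by simp
  also have "\<dots> = (\<Sum>n\<in>?I. if N = y * n then uc y k n else 0)"
    by (rule sum.cong) auto
  also have "\<dots> = (\<Sum>n\<in>{n\<in>?I. N = y * n}. uc y k n)"
  proof -
    have "?I \<subseteq> {..< nat k}"
    proof
      fix n assume "n \<in> ?I"
      moreover have "int n \<le> int ((y + 1) * n)" by simp
      ultimately have "int n < k" by (simp only: mem_Collect_eq)
      then show "n \<in> {..< nat k}" by (simp add: zless_nat_eq_int_zless)
    qed
    then have "finite ?I" using finite_subset by blast
    from sum.inter_filter[OF this, of "uc y k" "\<lambda>n. N = y * n"] show ?thesis by simp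
  qed
  also have "\<dots> = (if y dvd N \<and> int ((y + 1) * (N div y)) - k < 0 then uc y k (N div y) else 0)"
  proof (cases "y dvd N \<and> int ((y + 1) * (N div y)) - k < 0")
    case True
    then have "{n\<in>?I. N = y * n} = {N div y}" using assms by auto
    then show ?thesis by (subst if_P[OF True]) (simp only: sum.empty sum.insert_if finite.emptyI empty_iff if_False add_0_right)
  next
    case False
    then have "{n\<in>?I. N = y * n} = {}" using assms by auto
    then show ?thesis by (subst if_not_P[OF False]) (simp only: sum.empty)
  qed
  finally show ?thesis .
qed

lemma u_rec:
  assumes "y \<ge> 1" and "k \<ge> 1"
  shows "2 * u y k = u y (k + 1) + fps_X ^ y * u y (k - int y)"
proof (rule fps_ext)
  fix N
  show "fps_nth (2 * u y k) N = fps_nth (u y (k + 1) + fps_X ^ y * u y (k - int y)) N"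
  proof (cases "y dvd N")
    case False
    have "\<not> y dvd (N - y)" if "\<not> N < y" using False that
      by (metis dvd_diff_nat dvd_refl le_add_diff_inverse2 not_less dvd_add_right_iff)
    then show ?thesis using False assms
      by (simp add: u_nth fps_X_power_mult_nth fps_mult_left_const_nth numeral_fps_const)
  next
    case True
    then obtain n where N: "N = y * n" by auto
    have A: "fps_nth (2 * u y k) N = 2 * (if int ((y + 1) * n) - k < 0 then uc y k n else 0)"
      using assms N by (simp add: u_nth numeral_fps_const)
    have B: "fps_nth (u y (k+1)) N = (if int ((y + 1) * n) - (k+1) < 0 then uc y (k+1) n else 0)"
      using assms N by (simp add: u_nth)
    have C: "fps_nth (fps_X ^ y * u y (k - int y)) N = (if n = 0 then 0 else
       (if int ((y + 1) * (n - 1)) - (k - int y) < 0 then uc y (k - int y) (n - 1) else 0))"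
    proof (cases n)
      case 0 then show ?thesis using N assms by (simp add: fps_X_power_mult_nth)
    next
      case (Suc n')
      have "N - y = y * n'" using N Suc by (simp add: algebra_simps)
      then show ?thesis using N Suc assms by (simp add: fps_X_power_mult_nth u_nth)
    qed
    show ?thesis
    proof (cases n)
      case 0
      have p: "(2::real) powi (1 - k) = 2 * 2 powi (-k)" using power_int_add_1'[of "2::real" "-k"] by simp
      then show ?thesis using A B C assms 0 by (simp add: uc_def)
    next
      case (Suc n')
      define a where "a = int ((y + 1) * n) - k"
      have e1: "int ((y + 1) * (n - 1)) - (k - int y) = a - 1"
        using Suc by (simp add: a_def algebra_simps)
      have e2: "int ((y + 1) * n) - (k + 1) = a - 1" by (simp add: a_def)
      have pas: "real_of_int a gchoose n = (real_of_int (a - 1) gchoose n') + (real_of_int (a - 1) gchoose n)"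
        using gbinomial_Suc_Suc[of "real_of_int (a - 1)" n'] Suc by simp
      have p1: "(2::real) powi (a + 1) = 2 * 2 powi a"
        by (simp add: power_int_add_1')
      have uck: "uc y k n = (real_of_int a gchoose n) / 2 powi (a + 1)"
        by (simp add: uc_def a_def algebra_simps)
      have uck1: "uc y (k+1) n = (real_of_int (a - 1) gchoose n) / 2 powi a"
        by (simp add: uc_def a_def algebra_simps)
      have uck2: "uc y (k - int y) (n - 1) = (real_of_int (a - 1) gchoose n') / 2 powi a"
        using Suc by (simp add: uc_def a_def algebra_simps)
      have key: "2 * uc y k n = uc y (k+1) n + uc y (k - int y) (n - 1)"
        unfolding uck uck1 uck2 pas p1 by (simp add: add_divide_distrib)
      show ?thesis
      proof (cases "a < 0")
        case True
        then show ?thesis using A B C e1 e2 Suc key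
          by (simp add: a_def[symmetric])
      next
        case False
        show ?thesis
        proof (cases "a = 0")
          case True
          have "real_of_int a gchoose n = 0" using True Suc by (simp add: gbinomial_0)
          then have "uc y k n = 0" by (simp add: uck)
          then show ?thesis using A B C e1 e2 Suc True key
            by (simp add: a_def[symmetric])
        next
          case False
          then show ?thesis using A B C e1 e2 Suc \<open>\<not> a < 0\<close>
            by (simp add: a_def[symmetric])
        qed
      qed
    qed
  qed
qed

lemma u_0: "y \<ge> 1 \<Longrightarrow> fps_nth (u y k) 0 = (if k > 0 then 2 powi (k - 1) else 0)"
  by (simp add: u_nth uc_def power_int_diff)

lemma u_nonpos: "k \<le> 0 \<Longrightarrow> u y k = 0"
proof -
  assume k: "k \<le> 0"
  have "{n::nat. int ((y + 1) * n) - k < 0} = {}"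
  proof (safe)
    fix n assume "int ((y + 1) * n) - k < 0"
    moreover have "int ((y + 1) * n) \<ge> 0" by simp
    ultimately show "n \<in> {}" using k by linarith
  qed
  then show ?thesis unfolding u_def by simp
qed

definition stp :: "nat \<Rightarrow> bool \<Rightarrow> int" where "stp y b = (if b then int y else -1)"
definition S :: "nat \<Rightarrow> bool list \<Rightarrow> int" where "S y s = sum_list (map (stp y) s)"

lemma S_simps [simp]:
  "S y [] = 0" "S y (b # s) = stp y b + S y s" "S y (xs @ ys) = S y xs + S y ys"
  "S y (rev xs) = S y xs"
  by (simp_all add: S_def rev_map[symmetric] sum_list_rev)

lemma S_count: "S y s = int y * int (length (filter (\<lambda>b. b) s)) - int (length (filter Not s))"
  by (induct s) (auto simp: stp_def algebra_simps)

lemma len_split: "length s = length (filter (\<lambda>b. b) s) + length (filter Not s)"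
  using sum_length_filter_compl[of "\<lambda>b. b" s] by simp

lemma stp_fun: "stp y = (\<lambda>b. if b then int y else -1)"
  by (rule ext) (simp add: stp_def)

lemma walk_pos_S: "walk_pos y m s = m - 1 + S y s"
  by (simp add: walk_pos_def S_def stp_fun)

definition leftok :: "nat \<Rightarrow> int \<Rightarrow> nat \<Rightarrow> bool list \<Rightarrow> bool" where
  "leftok y m a s \<longleftrightarrow> (\<forall>k<length s. int a + S y (take k s) \<in> {1..m-1}) \<and> int a + S y s = 0"

definition Lf :: "nat \<Rightarrow> int \<Rightarrow> nat \<Rightarrow> nat \<Rightarrow> bool list set" where
  "Lf y m a j = {s. leftok y m a s \<and> length (filter Not s) = j}"

definition PL :: "nat \<Rightarrow> int \<Rightarrow> nat \<Rightarrow> nat \<Rightarrow> real" where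
  "PL y m a j = (\<Sum>s\<in>Lf y m a j. 1 / 2 ^ length s)"

lemma finite_len: "finite {s :: bool list. length s \<le> n}"
  using finite_lists_length_le[of "UNIV :: bool set" n] by simp

lemma finite_Lf:
  assumes "y \<ge> 1" shows "finite (Lf y m a j)"
proof -
  have "Lf y m a j \<subseteq> {s. length s \<le> 2 * j}"
  proof
    fix s assume "s \<in> Lf y m a j"
    then have h: "int a + S y s = 0" "length (filter Not s) = j" by (simp_all add: Lf_def leftok_def)
    define U where "U = length (filter (\<lambda>b. b) s)"
    have u1: "int y * int U \<le> int j" using h S_count[of y s] unfolding U_def by linarith
    have "int U * 1 \<le> int U * int y" by (rule mult_left_mono) (use assms in simp_all)
    then have "int U \<le> int j" using u1 by (simp add: mult.commute)
    then have "U \<le> j" by simp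
    then show "s \<in> {s. length s \<le> 2 * j}" using len_split[of s] h unfolding U_def by simp
  qed
  then show ?thesis using finite_len finite_subset by blast
qed

lemma leftok_nonempty:
  assumes "leftok y m a s" "s \<noteq> []" shows "int a \<in> {1..m-1}"
proof -
  have "0 < length s" using assms(2) by simp
  then have "int a + S y (take 0 s) \<in> {1..m-1}" using assms(1) unfolding leftok_def by blast
  then show ?thesis by simp
qed

lemma Lf_zero: "Lf y m 0 j = (if j = 0 then {[]} else {})"
proof -
  have "leftok y m 0 s \<longleftrightarrow> s = []" for s
  proof
    assume "leftok y m 0 s"
    then show "s = []" using leftok_nonempty[of y m 0 s] by (metis atLeastAtMost_iff of_nat_0 zero_less_one not_le)
  qed (simp add: leftok_def)
  then have "s \<in> Lf y m 0 j \<longleftrightarrow> s \<in> (if j = 0 then {[]} else {})" for s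
    unfolding Lf_def by (cases "s = []") auto
  then show ?thesis by blast
qed

lemma Lf_right:
  assumes "m \<ge> 2" "int a \<ge> m" shows "Lf y m a j = {}"
proof -
  have "\<not> leftok y m a s" for s
  proof
    assume l: "leftok y m a s"
    show False
    proof (cases "s = []")
      case True
      then have "int a = 0" using l by (simp add: leftok_def)
      then show False using assms by simp
    next
      case False
      then show False using leftok_nonempty[OF l] assms by simp
    qed
  qed
  then show ?thesis unfolding Lf_def by blast
qed

lemma Lf_pos0:
  assumes "a \<ge> 1" shows "Lf y m a 0 = {}"
proof -
  have "s \<notin> Lf y m a 0" for s
  proof
    assume "s \<in> Lf y m a 0"
    then have h: "int a + S y s = 0" "length (filter Not s) = 0" by (simp_all add: Lf_def leftok_def)
    have "0 \<le> int y * int (length (filter (\<lambda>b. b) s))" by simp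
    then show False using h S_count[of y s] assms by linarith
  qed
  then show ?thesis by blast
qed

lemma leftok_Cons:
  assumes "1 \<le> a" "int a \<le> m - 1"
  shows "leftok y m a (b # s) \<longleftrightarrow> leftok y m (if b then a + y else a - 1) s"
proof -
  have e: "int (if b then a + y else a - 1) = int a + stp y b"
    using assms by (simp add: stp_def of_nat_diff)
  have "leftok y m a (b # s) \<longleftrightarrow> (int a + S y [] \<in> {1..m-1} \<and>
       (\<forall>k<length s. int a + (stp y b + S y (take k s)) \<in> {1..m-1})) \<and> int a + (stp y b + S y s) = 0"
    by (simp only: leftok_def length_Cons All_less_Suc2 take_0 take_Suc_Cons S_simps)
  also have "\<dots> \<longleftrightarrow> (\<forall>k<length s. (int a + stp y b) + S y (take k s) \<in> {1..m-1}) \<and> (int a + stp y b) + S y s = 0"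
    using assms by (simp add: add.assoc)
  also have "\<dots> \<longleftrightarrow> leftok y m (if b then a + y else a - 1) s"
    by (simp only: leftok_def e)
  finally show ?thesis .
qed

lemma PL_rec:
  assumes y: "y \<ge> 1" and a: "1 \<le> a" "int a \<le> m - 1"
  shows "PL y m a j = (PL y m (a + y) j + (if j = 0 then 0 else PL y m (a - 1) (j - 1))) / 2"
proof -
  define B where "B = (if j = 0 then {} else Lf y m (a - 1) (j - 1))"
  have e: "Lf y m a j = Cons True ` Lf y m (a + y) j \<union> Cons False ` B"
  proof (rule set_eqI)
    fix s
    show "s \<in> Lf y m a j \<longleftrightarrow> s \<in> Cons True ` Lf y m (a + y) j \<union> Cons False ` B"
    proof (cases s)
      case Nil
      then show ?thesis using a by (auto simp: Lf_def leftok_def)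
    next
      case (Cons b s')
      then show ?thesis using a leftok_Cons[OF a, of y b s']
        by (cases b) (auto simp: Lf_def B_def)
    qed
  qed
  have fB: "finite B" using finite_Lf[OF y] by (simp add: B_def)
  have "PL y m a j = (\<Sum>s\<in>Cons True ` Lf y m (a + y) j. 1 / 2 ^ length s)
                    + (\<Sum>s\<in>Cons False ` B. 1 / 2 ^ length s)"
    unfolding PL_def e
    by (rule sum.union_disjoint) (use finite_Lf[OF y] fB in auto)
  also have "\<dots> = (\<Sum>s\<in>Lf y m (a + y) j. 1 / 2 ^ length (True # s))
                    + (\<Sum>s\<in>B. 1 / 2 ^ length (False # s))"
    by (simp only: sum.reindex[OF inj_on_Cons1] o_def)
  also have "\<dots> = (\<Sum>s\<in>Lf y m (a + y) j. (1 / 2 ^ length s) / 2)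
                    + (\<Sum>s\<in>B. (1 / 2 ^ length s) / 2)"
    by (simp add: mult.commute)
  also have "\<dots> = PL y m (a + y) j / 2 + (\<Sum>s\<in>B. 1 / 2 ^ length s) / 2"
    by (simp only: PL_def sum_divide_distrib)
  also have "(\<Sum>s\<in>B. 1 / 2 ^ length s) = (if j = 0 then 0 else PL y m (a - 1) (j - 1))"
    by (simp add: B_def PL_def)
  finally show ?thesis by (simp add: add_divide_distrib)
qed

definition Cand :: "nat \<Rightarrow> int \<Rightarrow> nat \<Rightarrow> real fps" where
  "Cand y m a = fps_X ^ a * u y (m - int a) * inverse (u y m)"

lemma um0: "y \<ge> 1 \<Longrightarrow> m \<ge> 1 \<Longrightarrow> fps_nth (u y m) 0 \<noteq> 0"
  by (simp add: u_0)

lemma Cand_0: "y \<ge> 1 \<Longrightarrow> m \<ge> 1 \<Longrightarrow> Cand y m 0 = 1"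
  unfolding Cand_def using inverse_mult_eq_1'[OF um0] by simp

lemma Cand_right: "int a \<ge> m \<Longrightarrow> Cand y m a = 0"
  unfolding Cand_def by (simp add: u_nonpos)

lemma Cand_rec:
  assumes y: "y \<ge> 1" and a: "1 \<le> a" "int a \<le> m - 1"
  shows "2 * Cand y m a = Cand y m (a + y) + fps_X * Cand y m (a - 1)"
proof -
  define k where "k = m - int a"
  have k1: "k \<ge> 1" using a by (simp add: k_def)
  have r: "2 * u y k = u y (k + 1) + fps_X ^ y * u y (k - int y)" by (rule u_rec[OF y k1])
  have e1: "m - int (a + y) = k - int y" by (simp add: k_def)
  have e2: "m - int (a - 1) = k + 1" using a by (simp add: k_def of_nat_diff)
  have x1: "fps_X ^ (a + y) = fps_X ^ a * (fps_X ^ y :: real fps)" by (simp add: power_add)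
  have x2: "fps_X * fps_X ^ (a - 1) = (fps_X ^ a :: real fps)"
    using a by (metis Suc_diff_1 less_le_trans zero_less_one power_Suc)
  have "2 * Cand y m a = fps_X ^ a * (2 * u y k) * inverse (u y m)"
    by (simp add: Cand_def k_def algebra_simps)
  also have "\<dots> = fps_X ^ a * (u y (k + 1) + fps_X ^ y * u y (k - int y)) * inverse (u y m)"
    by (simp only: r)
  also have "\<dots> = fps_X ^ a * u y (k + 1) * inverse (u y m) + fps_X ^ a * fps_X ^ y * u y (k - int y) * inverse (u y m)"
    by (simp add: algebra_simps)
  also have "\<dots> = Cand y m (a + y) + fps_X * Cand y m (a - 1)"
    unfolding Cand_def e1 e2 x1 by (simp add: x2[symmetric] algebra_simps)
  finally show ?thesis .
qed

lemma Cand_nth_rec: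
  assumes y: "y \<ge> 1" and a: "1 \<le> a" "int a \<le> m - 1"
  shows "fps_nth (Cand y m a) j = (fps_nth (Cand y m (a + y)) j +
           (if j = 0 then 0 else fps_nth (Cand y m (a - 1)) (j - 1))) / 2"
proof -
  have "fps_nth (2 * Cand y m a) j = fps_nth (Cand y m (a + y) + fps_X * Cand y m (a - 1)) j"
    by (simp only: Cand_rec[OF assms])
  then show ?thesis by (cases "j = 0") (simp_all add: numeral_fps_const mult.commute)
qed

lemma PL_Cand:
  assumes y: "y \<ge> 1" and m: "m \<ge> 2"
  shows "int a \<le> m + int y - 1 \<Longrightarrow> PL y m a j = fps_nth (Cand y m a) j"
proof (induction j arbitrary: a rule: less_induct)
  case (less j)
  note IHj = less.IH
  have main: "\<forall>a. nat (m + int y - 1 - int a) = d \<longrightarrow> int a \<le> m + int y - 1 \<longrightarrow>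
                 PL y m a j = fps_nth (Cand y m a) j" for d
  proof (induction d rule: less_induct)
    case (less d)
    show ?case
    proof (intro allI impI)
      fix a assume d: "nat (m + int y - 1 - int a) = d" and a: "int a \<le> m + int y - 1"
      consider "a = 0" | "int a \<ge> m" | "1 \<le> a \<and> int a \<le> m - 1" by linarith
      then show "PL y m a j = fps_nth (Cand y m a) j"
      proof cases
        case 1
        then show ?thesis using y m by (simp add: PL_def Lf_zero Cand_0)
      next
        case 2
        then show ?thesis using m by (simp add: PL_def Lf_right Cand_right)
      next
        case 3
        then have a1: "1 \<le> a" "int a \<le> m - 1" by auto
        have h1: "PL y m (a + y) j = fps_nth (Cand y m (a + y)) j"
          using less.IH[of "nat (m + int y - 1 - int (a + y))"] d a1 y by auto
        have h2: "j \<noteq> 0 \<Longrightarrow> PL y m (a - 1) (j - 1) = fps_nth (Cand y m (a - 1)) (j - 1)"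
          using IHj[of "j - 1" "a - 1"] a1 y by (simp add: of_nat_diff)
        show ?thesis
          using PL_rec[OF y a1, of j] Cand_nth_rec[OF y a1, of j] h1 h2 by (cases "j = 0") simp_all
      qed
    qed
  qed
  then show ?case using less.prems by blast
qed

definition coreR :: "nat \<Rightarrow> int \<Rightarrow> bool list \<Rightarrow> bool" where
  "coreR y m s0 \<longleftrightarrow> (\<forall>k\<le>length s0. m - 1 + S y (take k s0) \<in> {1..m-1}) \<and> S y s0 \<in> {1 - int y..0}"

definition coreL :: "nat \<Rightarrow> int \<Rightarrow> nat \<Rightarrow> bool list \<Rightarrow> bool" where
  "coreL y m i s1 \<longleftrightarrow> (\<forall>k\<le>length s1. int i + S y (take k s1) \<in> {1..m-1}) \<and> int i + S y s1 = 1"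

lemma ar_prefix:
  assumes m: "m \<ge> 2" and ar: "absorbed_right y m s"
  shows "k < length s \<Longrightarrow> m - 1 + S y (take k s) \<in> {1..m-1}"
proof (induction k)
  case 0 then show ?case using m by simp
next
  case (Suc k)
  then have IH: "m - 1 + S y (take k s) \<in> {1..m-1}" by simp
  have t: "take (Suc k) s = take k s @ [s ! k]" using Suc.prems by (simp add: take_Suc_conv_app_nth)
  have na: "walk_pos y m (take (Suc k) s) \<notin> absorbing y m"
    using ar Suc.prems unfolding absorbed_right_def by blast
  have "m - 1 + S y (take (Suc k) s) = m - 1 + S y (take k s) + stp y (s ! k)" by (simp add: t)
  then show ?case using IH na by (auto simp: walk_pos_S absorbing_def stp_def split: if_splits)
qed

lemma R1:
  assumes m: "m \<ge> 2" and ar: "absorbed_right y m s"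
  shows "s \<noteq> [] \<and> last s \<and> coreR y m (butlast s) \<and> length (filter Not (butlast s)) = length (filter Not s)"
proof -
  have fin: "m - 1 + S y s \<in> {m..m + int y - 1}" using ar by (simp add: absorbed_right_def walk_pos_S)
  have ne: "s \<noteq> []" using fin by auto
  have sp: "s = butlast s @ [last s]" using ne by simp
  have bl: "butlast s = take (length s - 1) s" by (simp add: butlast_conv_take)
  have p: "m - 1 + S y (butlast s) \<in> {1..m-1}"
    unfolding bl by (rule ar_prefix[OF m ar]) (use ne in simp)
  have fin2: "m - 1 + S y (butlast s) + stp y (last s) \<in> {m..m + int y - 1}"
    using fin sp by (metis S_simps(2) S_simps(1) S_simps(3) add.assoc add_0_right)
  have l: "last s" using p fin2 by (auto simp: stp_def split: if_splits)
  have Sb: "S y (butlast s) \<in> {1 - int y..0}" using fin2 l by (simp add: stp_def)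
  have pre: "\<forall>k\<le>length (butlast s). m - 1 + S y (take k (butlast s)) \<in> {1..m-1}"
  proof (intro allI impI)
    fix k assume kk: "k \<le> length (butlast s)"
    have "length (butlast s) < length s" using ne by simp
    then have k: "k < length s" using kk by linarith
    then show "m - 1 + S y (take k (butlast s)) \<in> {1..m-1}"
      using ar_prefix[OF m ar k] by (simp add: take_butlast)
  qed
  have cnt: "length (filter Not (butlast s)) = length (filter Not s)"
    using l by (subst (2) sp) simp
  show ?thesis using ne l pre Sb cnt by (simp add: coreR_def)
qed

lemma R2:
  assumes "coreR y m s0"
  shows "absorbed_right y m (s0 @ [True])"
proof -
  have pre: "\<forall>k\<le>length s0. m - 1 + S y (take k s0) \<in> {1..m-1}" and Sb: "S y s0 \<in> {1 - int y..0}"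
    using assms by (auto simp: coreR_def)
  have "\<forall>t<length (s0 @ [True]). walk_pos y m (take t (s0 @ [True])) \<notin> absorbing y m"
  proof (intro allI impI)
    fix t assume "t < length (s0 @ [True])"
    then have t: "t \<le> length s0" by simp
    then have "take t (s0 @ [True]) = take t s0" by simp
    then show "walk_pos y m (take t (s0 @ [True])) \<notin> absorbing y m"
      using pre t by (auto simp: walk_pos_S absorbing_def)
  qed
  moreover have "walk_pos y m (s0 @ [True]) \<in> {m..m + int y - 1}"
    using Sb by (simp add: walk_pos_S stp_def)
  ultimately show ?thesis by (simp add: absorbed_right_def)
qed

lemma L1:
  assumes i: "i \<ge> 1" and l: "leftok y m i s"
  shows "s \<noteq> [] \<and> \<not> last s \<and> coreL y m i (butlast s) \<and> length (filter Not (butlast s)) + 1 = length (filter Not s)"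
proof -
  have fin: "int i + S y s = 0" using l by (simp add: leftok_def)
  have ne: "s \<noteq> []" using fin i by auto
  have sp: "s = butlast s @ [last s]" using ne by simp
  have bl: "butlast s = take (length s - 1) s" by (simp add: butlast_conv_take)
  have p: "int i + S y (butlast s) \<in> {1..m-1}"
    using l ne unfolding bl leftok_def by simp
  have fin2: "int i + S y (butlast s) + stp y (last s) = 0"
    using fin sp by (metis S_simps(2) S_simps(1) S_simps(3) add.assoc add_0_right)
  have nl: "\<not> last s" using p fin2 by (auto simp: stp_def split: if_splits)
  have Sb: "int i + S y (butlast s) = 1" using fin2 nl by (simp add: stp_def)
  have pre: "\<forall>k\<le>length (butlast s). int i + S y (take k (butlast s)) \<in> {1..m-1}"
  proof (intro allI impI)
    fix k assume kk: "k \<le> length (butlast s)"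
    have "length (butlast s) < length s" using ne by simp
    then have k: "k < length s" using kk by linarith
    then show "int i + S y (take k (butlast s)) \<in> {1..m-1}"
      using l by (simp add: take_butlast leftok_def)
  qed
  have cnt: "length (filter Not (butlast s)) + 1 = length (filter Not s)"
    using nl by (subst (2) sp) simp
  show ?thesis using ne nl pre Sb cnt by (simp add: coreL_def)
qed

lemma L2:
  assumes "coreL y m i s1"
  shows "leftok y m i (s1 @ [False])"
proof -
  have pre: "\<forall>k\<le>length s1. int i + S y (take k s1) \<in> {1..m-1}" and Sb: "int i + S y s1 = 1"
    using assms by (auto simp: coreL_def)
  have "\<forall>t<length (s1 @ [False]). int i + S y (take t (s1 @ [False])) \<in> {1..m-1}"
  proof (intro allI impI)
    fix t assume "t < length (s1 @ [False])"
    then have t: "t \<le> length s1" by simp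
    then have "take t (s1 @ [False]) = take t s1" by simp
    then show "int i + S y (take t (s1 @ [False])) \<in> {1..m-1}"
      using pre t by simp
  qed
  moreover have "int i + S y (s1 @ [False]) = 0"
    using Sb by (simp add: stp_def)
  ultimately show ?thesis by (simp add: leftok_def)
qed

lemma S_take_rev:
  assumes "k \<le> length xs"
  shows "S y (take k (rev xs)) = S y xs - S y (take (length xs - k) xs)"
proof -
  have "S y xs = S y (take (length xs - k) xs) + S y (drop (length xs - k) xs)"
    by (metis S_simps(3) append_take_drop_id)
  then show ?thesis by (simp add: take_rev)
qed

lemma Rev1:
  assumes "coreR y m s0"
  shows "coreL y m (nat (1 - S y s0)) (rev s0)"
proof -
  have pre: "\<forall>k\<le>length s0. m - 1 + S y (take k s0) \<in> {1..m-1}" and Sb: "S y s0 \<in> {1 - int y..0}"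
    using assms by (auto simp: coreR_def)
  have ni: "int (nat (1 - S y s0)) = 1 - S y s0" using Sb by simp
  have "\<forall>k\<le>length (rev s0). int (nat (1 - S y s0)) + S y (take k (rev s0)) \<in> {1..m-1}"
  proof (intro allI impI)
    fix k assume k: "k \<le> length (rev s0)"
    then have "length s0 - k \<le> length s0" by simp
    then have "m - 1 + S y (take (length s0 - k) s0) \<in> {1..m-1}" using pre by blast
    then show "int (nat (1 - S y s0)) + S y (take k (rev s0)) \<in> {1..m-1}"
      using k Sb by (simp add: ni S_take_rev)
  qed
  then show ?thesis using Sb by (simp add: coreL_def ni)
qed

lemma Rev2:
  assumes "coreL y m i s1" "1 \<le> i" "i \<le> y"
  shows "coreR y m (rev s1)"
proof -
  have pre: "\<forall>k\<le>length s1. int i + S y (take k s1) \<in> {1..m-1}" and Sb: "int i + S y s1 = 1"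
    using assms by (auto simp: coreL_def)
  have "\<forall>k\<le>length (rev s1). m - 1 + S y (take k (rev s1)) \<in> {1..m-1}"
  proof (intro allI impI)
    fix k assume k: "k \<le> length (rev s1)"
    then have "length s1 - k \<le> length s1" by simp
    then have "int i + S y (take (length s1 - k) s1) \<in> {1..m-1}" using pre by blast
    then show "m - 1 + S y (take k (rev s1)) \<in> {1..m-1}"
      using k Sb by (simp add: S_take_rev)
  qed
  moreover have "S y (rev s1) \<in> {1 - int y..0}" using Sb assms(2,3) by simp
  ultimately show ?thesis by (simp add: coreR_def)
qed

lemma finite_RS:
  assumes y: "y \<ge> 1" shows "finite {s. absorbed_right y m s \<and> length (filter Not s) = j}"
proof -
  have "{s. absorbed_right y m s \<and> length (filter Not s) = j} \<subseteq> {s. length s \<le> 2 * j + y}"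
  proof
    fix s assume "s \<in> {s. absorbed_right y m s \<and> length (filter Not s) = j}"
    then have h: "m - 1 + S y s \<le> m + int y - 1" "length (filter Not s) = j"
      by (simp_all add: absorbed_right_def walk_pos_S)
    define U where "U = length (filter (\<lambda>b. b) s)"
    have u1: "int y * int U \<le> int j + int y" using h S_count[of y s] unfolding U_def by linarith
    have "int U * 1 \<le> int U * int y" by (rule mult_left_mono) (use y in simp_all)
    then have "int U \<le> int j + int y" using u1 by (simp add: mult.commute)
    then have "U \<le> j + y" by simp
    then show "s \<in> {s. length s \<le> 2 * j + y}" using len_split[of s] h unfolding U_def by simp
  qed
  then show ?thesis using finite_len finite_subset by blast
qed

lemma suminf_card:
  assumes fin: "finite {s::bool list. P s}"
  shows "(\<Sum>L. real (card {s. length s = L \<and> P s}) / 2 ^ L) = (\<Sum>s | P s. 1 / 2 ^ length s)"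
proof -
  let ?F = "{s. P s}"
  have "(\<Sum>L. real (card {s. length s = L \<and> P s}) / 2 ^ L)
        = (\<Sum>L\<in>length ` ?F. real (card {s. length s = L \<and> P s}) / 2 ^ L)"
  proof (rule suminf_finite)
    show "finite (length ` ?F)" using fin by simp
    fix L assume "L \<notin> length ` ?F"
    then have "{s. length s = L \<and> P s} = {}" by auto
    then have "card {s. length s = L \<and> P s} = 0" by (simp only: card.empty)
    then show "real (card {s. length s = L \<and> P s}) / 2 ^ L = 0" by simp
  qed
  also have "\<dots> = (\<Sum>L\<in>length ` ?F. \<Sum>s\<in>{s\<in>?F. length s = L}. 1 / 2 ^ length s)"
  proof (rule sum.cong[OF refl])
    fix L assume "L \<in> length ` ?F"
    have e: "{s\<in>?F. length s = L} = {s. length s = L \<and> P s}" by auto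
    have "(\<Sum>s\<in>{s\<in>?F. length s = L}. 1 / 2 ^ length s) = (\<Sum>s\<in>{s\<in>?F. length s = L}. 1 / 2 ^ L)"
      by (rule sum.cong) auto
    then show "real (card {s. length s = L \<and> P s}) / 2 ^ L = (\<Sum>s\<in>{s\<in>?F. length s = L}. 1 / 2 ^ length s)"
      by (simp add: e conj_commute)
  qed
  also have "\<dots> = (\<Sum>s\<in>?F. 1 / 2 ^ length s)"
    by (rule sum.group) (use fin in auto)
  finally show ?thesis .
qed

lemma rho_eq:
  assumes y: "y \<ge> 1" and m: "m \<ge> 2"
  shows "rho y m j = (\<Sum>i=1..y. PL y m i (Suc j))"
proof -
  let ?RS = "{s. absorbed_right y m s \<and> length (filter Not s) = j}"
  let ?Sig = "SIGMA i:{1..y}. Lf y m i (Suc j)"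
  define f where "f s = (nat (1 - S y (butlast s)), rev (butlast s) @ [False])" for s
  define g where "g p = rev (butlast (snd p)) @ [True]" for p :: "nat \<times> bool list"
  have rho: "rho y m j = (\<Sum>s\<in>?RS. 1 / 2 ^ length s)"
    unfolding rho_def using suminf_card[OF finite_RS[OF y]] by simp
  have bij: "bij_betw f ?RS ?Sig"
  proof (rule bij_betw_byWitness[where f' = g])
    show "\<forall>a\<in>?RS. g (f a) = a"
    proof
      fix s assume "s \<in> ?RS"
      then have r: "s \<noteq> [] \<and> last s" using R1[OF m] by blast
      have e: "butlast s @ [True] = s" using r by (metis append_butlast_last_id)
      have "g (f s) = butlast s @ [True]" by (simp add: f_def g_def)
      then show "g (f s) = s" by (rule trans[OF _ e])
    qed
    show "\<forall>p\<in>?Sig. f (g p) = p"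
    proof
      fix p assume "p \<in> ?Sig"
      then obtain i s' where p: "p = (i, s')" "i \<in> {1..y}" "s' \<in> Lf y m i (Suc j)" by auto
      then have l: "leftok y m i s'" by (simp add: Lf_def)
      have r: "s' \<noteq> [] \<and> \<not> last s' \<and> coreL y m i (butlast s')" using L1[OF _ l] p(2) by simp
      then have sb: "S y (butlast s') = 1 - int i" by (simp add: coreL_def)
      have e: "butlast s' @ [False] = s'" using r by (metis append_butlast_last_id)
      have "f (g p) = (i, butlast s' @ [False])" using p sb by (simp add: f_def g_def)
      then show "f (g p) = p" using e p(1) by simp
    qed
    show "f ` ?RS \<subseteq> ?Sig"
    proof
      fix p assume "p \<in> f ` ?RS"
      then obtain s where s: "absorbed_right y m s" "length (filter Not s) = j" "p = f s" by auto
      have r: "s \<noteq> [] \<and> last s \<and> coreR y m (butlast s) \<and> length (filter Not (butlast s)) = length (filter Not s)"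
        using R1[OF m s(1)] .
      have cl: "coreL y m (nat (1 - S y (butlast s))) (rev (butlast s))" using Rev1 r by blast
      have lo: "leftok y m (nat (1 - S y (butlast s))) (rev (butlast s) @ [False])" using L2[OF cl] .
      have "S y (butlast s) \<in> {1 - int y..0}" using r by (simp add: coreR_def)
      then have i: "nat (1 - S y (butlast s)) \<in> {1..y}" by auto
      have c: "length (filter Not (rev (butlast s) @ [False])) = Suc j" using r s(2) by (simp add: rev_filter[symmetric])
      show "p \<in> ?Sig" using i lo c s(3) by (simp add: f_def Lf_def)
    qed
    show "g ` ?Sig \<subseteq> ?RS"
    proof
      fix q assume "q \<in> g ` ?Sig"
      then obtain i s' where p: "q = g (i, s')" "i \<in> {1..y}" "s' \<in> Lf y m i (Suc j)" by auto
      then have l: "leftok y m i s'" and cnt: "length (filter Not s') = Suc j" by (simp_all add: Lf_def)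
      have r: "s' \<noteq> [] \<and> \<not> last s' \<and> coreL y m i (butlast s') \<and> length (filter Not (butlast s')) + 1 = length (filter Not s')"
        using L1[OF _ l] p(2) by simp
      have cr: "coreR y m (rev (butlast s'))" using Rev2[of y m i "butlast s'"] r p(2) by simp
      have ar: "absorbed_right y m (rev (butlast s') @ [True])" using R2[OF cr] .
      have c: "length (filter Not (rev (butlast s') @ [True])) = j" using r cnt by (simp add: rev_filter[symmetric])
      show "q \<in> ?RS" using ar c p(1) by (simp add: g_def)
    qed
  qed
  have "(\<Sum>s\<in>?RS. 1 / 2 ^ length s) = (\<Sum>s\<in>?RS. 1 / 2 ^ length (snd (f s)))"
  proof (rule sum.cong[OF refl])
    fix s assume "s \<in> ?RS"
    then have "s \<noteq> []" using R1[OF m] by blast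
    then show "1 / 2 ^ length s = 1 / 2 ^ length (snd (f s))" by (simp add: f_def)
  qed
  also have "\<dots> = (\<Sum>p\<in>?Sig. 1 / 2 ^ length (snd p))"
    by (rule sum.reindex_bij_betw[OF bij])
  also have "\<dots> = (\<Sum>(i, s)\<in>?Sig. 1 / 2 ^ length s)"
    by (simp add: split_def)
  also have "\<dots> = (\<Sum>i=1..y. \<Sum>s\<in>Lf y m i (Suc j). 1 / 2 ^ length s)"
    by (rule sum.Sigma[symmetric]) (auto simp: finite_Lf[OF y])
  finally show ?thesis unfolding rho PL_def .
qed

theorem mainTheorem2:
  fixes y :: nat and m :: int
  assumes "y \<ge> 1" and "m \<ge> 2"
  shows "p_r y m = (\<Sum>i=1..y. fps_X ^ i * u y (m - int i)) / u y m"
proof -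
  have y: "y \<ge> 1" and m: "m \<ge> 2" using assms by auto
  have u0: "fps_nth (u y m) 0 \<noteq> 0" using um0 y m by simp
  have pc: "PL y m i n = fps_nth (Cand y m i) n" if "i \<in> {1..y}" for i n
    using PL_Cand[OF y m, of i n] that m by simp
  have pr: "p_r y m = (\<Sum>i=1..y. Cand y m i)"
  proof (rule fps_ext)
    fix n
    show "fps_nth (p_r y m) n = fps_nth (\<Sum>i=1..y. Cand y m i) n"
    proof (cases n)
      case 0
      have "fps_nth (Cand y m i) 0 = 0" if "i \<in> {1..y}" for i
        using pc[OF that, of 0] that by (simp add: PL_def Lf_pos0)
      then show ?thesis using 0 by (simp add: p_r_def fps_sum_nth)
    next
      case (Suc j)
      have "(\<Sum>i=1..y. fps_nth (Cand y m i) (Suc j)) = (\<Sum>i=1..y. PL y m i (Suc j))"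
        by (rule sum.cong) (simp_all add: pc)
      then show ?thesis using Suc rho_eq[OF y m, of j] by (simp add: p_r_def fps_sum_nth)
    qed
  qed
  also have "\<dots> = (\<Sum>i=1..y. fps_X ^ i * u y (m - int i)) * inverse (u y m)"
    by (simp add: Cand_def sum_distrib_right)
  also have "\<dots> = (\<Sum>i=1..y. fps_X ^ i * u y (m - int i)) / u y m"
    by (simp add: fps_divide_unit[OF u0])
  finally show ?thesis .
qed

end
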